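(* Assume $\mu\le1$. Then for every positive integer $r$, $$\mathbf{P}[M\ge r]\le\frac1r.$$
   Context: Let $p=(p_0,p_1,p_2,\dots)$ be a probability distribution on the nonnegative integers with mean $\mu=\sum_k kp_k\in(0,\infty)$, and let $\tau(p)$ be a Galton–Watson tree with offspring distribution $p$: it starts with a single root at generation $0$, and every vertex independently has $k$children with probability $p_k$. The out-degree of a vertex is its number of children. $M$ denotes the global maximal out-degree, i.e. the supremum of the out-degrees of all vertices of $\tau(p)$. *)

theory Defs
  imports "HOL-Probability.Probability"
begin

text \<open>Galton-Watson tree in Ulam-Harris encoding. Vertices are labelled by
finite lists of naturals; the root is the empty list, and the children of u
are u @ [j] for j < (number of children of u). An i.i.d. family X of offspring
counts indexed by all labels determines the tree: u is a vertex iff every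
prefix-step is within the offspring number of its parent.\<close>

definition gw_vertex :: "(nat list \<Rightarrow> 'a \<Rightarrow> nat) \<Rightarrow> 'a \<Rightarrow> nat list \<Rightarrow> bool" where
  "gw_vertex X \<omega> u \<longleftrightarrow> (\<forall>i < length u. u ! i < X (take i u) \<omega>)"

definition gw_maxdeg :: "(nat list \<Rightarrow> 'a \<Rightarrow> nat) \<Rightarrow> 'a \<Rightarrow> enat" where
  "gw_maxdeg X \<omega> = (SUP u \<in> {u. gw_vertex X \<omega> u}. enat (X u \<omega>))"

end

theory Submission
  imports Defs
begin

lemma sum_lists_prod:
  fixes f :: "nat \<Rightarrow> real" assumes "finite A"
  shows "(\<Sum>u\<in>{u. set u \<subseteq> A \<and> length u = n}. \<Prod>i<n. f (u!i)) = (\<Sum>j\<in>A. f j)^n"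
proof (induction n)
  case 0
  have "{u. set u \<subseteq> A \<and> length u = 0} = {[]}" by auto
  then show ?case by simp
next
  case (Suc n)
  have inj: "inj_on (\<lambda>(xs, n). n#xs) ({xs. set xs \<subseteq> A \<and> length xs = n} \<times> A)"
    by (auto simp: inj_on_def)
  have "(\<Sum>u\<in>{u. set u \<subseteq> A \<and> length u = Suc n}. \<Prod>i<Suc n. f (u!i))
      = (\<Sum>(xs,x)\<in>{xs. set xs \<subseteq> A \<and> length xs = n} \<times> A. f x * (\<Prod>i<n. f (xs!i)))"
    unfolding lists_length_Suc_eq
    by (subst sum.reindex[OF inj]) (simp del: prod.lessThan_Suc add: case_prod_unfold prod.lessThan_Suc_shift)
  also have "\<dots> = (\<Sum>xs\<in>{xs. set xs \<subseteq> A \<and> length xs = n}. \<Sum>x\<in>A. f x * (\<Prod>i<n. f (xs!i)))"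
    by (rule sum.cartesian_product[symmetric])
  also have "\<dots> = (\<Sum>xs\<in>{xs. set xs \<subseteq> A \<and> length xs = n}. (\<Sum>x\<in>A. f x) * (\<Prod>i<n. f (xs!i)))"
    by (simp add: sum_distrib_right)
  also have "\<dots> = (\<Sum>x\<in>A. f x) * (\<Sum>j\<in>A. f j)^n"
    by (simp add: sum_distrib_left[symmetric] Suc)
  finally show ?case by simp
qed

lemma double_sum:
  fixes a :: "nat \<Rightarrow> real"
  shows "(\<Sum>j<r. \<Sum>k\<in>{j<..<r}. a k) = (\<Sum>k<r. real k * a k)"
proof (induction r)
  case 0 then show ?case by simp
next
  case (Suc r)
  have "(\<Sum>j<Suc r. \<Sum>k\<in>{j<..<Suc r}. a k) = (\<Sum>j<Suc r. (\<Sum>k\<in>{j<..<r}. a k) + (if j < r then a r else 0))"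
  proof (rule sum.cong)
    fix j assume "j \<in> {..<Suc r}"
    show "(\<Sum>k\<in>{j<..<Suc r}. a k) = (\<Sum>k\<in>{j<..<r}. a k) + (if j < r then a r else 0)"
    proof (cases "j < r")
      case True
      then have "{j<..<Suc r} = insert r {j<..<r}" by auto
      then show ?thesis using True by simp
    next
      case False
      then have "{j<..<Suc r} = {}" "{j<..<r} = {}" by auto
      then show ?thesis using False by simp
    qed
  qed simp
  also have "\<dots> = (\<Sum>j<r. \<Sum>k\<in>{j<..<r}. a k) + real r * a r"
    by (simp add: sum.distrib)
  finally show ?case using Suc by simp
qed

lemma pmf_sums: "(\<lambda>k. pmf (p::nat pmf) k) sums 1"
proof -
  have "(\<lambda>i. measure p {..<i}) \<longlonglongrightarrow> measure p (\<Union>i. {..<i})"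
    by (rule measure_pmf.finite_Lim_measure_incseq) (auto simp: incseq_def)
  moreover have "(\<Union>i. {..<i::nat}) = UNIV" by auto
  ultimately show ?thesis
    by (simp add: sums_def measure_measure_pmf_finite)
qed


theorem lemma2p7:
  fixes M :: "'a measure" and p :: "nat pmf" and X :: "nat list \<Rightarrow> 'a \<Rightarrow> nat" and r :: nat
  assumes "prob_space M"
    and "prob_space.indep_vars M (\<lambda>_. count_space UNIV) X UNIV"
    and "\<And>u k. measure M {\<omega> \<in> space M. X u \<omega> = k} = pmf p k"
    and "summable (\<lambda>k. real k * pmf p k)"
    and "(\<Sum>k. real k * pmf p k) > 0"
    and "(\<Sum>k. real k * pmf p k) \<le> 1"
    and "r \<ge> 1"
  shows "measure M {\<omega> \<in> space M. enat r \<le> gw_maxdeg X \<omega>} \<le> 1 / real r"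
proof -
  interpret P: prob_space M by fact
  have rv: "\<And>u. X u \<in> measurable M (count_space UNIV)"
    and ind: "P.indep_sets (\<lambda>i. sigma_sets (space M) {X i -` A \<inter> space M |A. A \<in> sets (count_space UNIV)}) UNIV"
    using assms(2) unfolding P.indep_vars_def by auto
  have distr: "distr M (count_space UNIV) (X u) = measure_pmf p" for u
  proof (rule measure_eqI_countable[where A=UNIV])
    fix a :: nat
    have "X u -` {a} \<inter> space M = {\<omega> \<in> space M. X u \<omega> = a}" by auto
    then show "emeasure (distr M (count_space UNIV) (X u)) {a} = emeasure (measure_pmf p) {a}"
      using rv[of u] assms(3)[of u a]
      by (simp add: emeasure_distr P.emeasure_eq_measure emeasure_pmf_single)
  qed auto
  have probX: "measure M (X u -` S \<inter> space M) = measure p S" for u S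
  proof -
    have "measure M (X u -` S \<inter> space M) = measure (distr M (count_space UNIV) (X u)) S"
      using rv[of u] by (simp add: measure_distr)
    then show ?thesis by (simp add: distr)
  qed
  define q where "q = measure p {r..}"
  define f where "f j = measure p {j<..<r}" for j
  define m where "m = (\<Sum>j<r. f j)"
  define A where "A u = {\<omega>\<in>space M. (\<forall>i<length u. u!i < X (take i u) \<omega> \<and> X (take i u) \<omega> < r) \<and> r \<le> X u \<omega>}" for u
  define L where "L n = {u. set u \<subseteq> {..<r} \<and> length u = n}" for n
  define B where "B n = (\<Union>u\<in>L n. A u)" for n
  have finL: "finite (L n)" for n unfolding L_def by (rule finite_lists_length_eq) simp
  have Asets: "A u \<in> P.events" for u
  proof -
    note rv[measurable]
    show ?thesis unfolding A_def by measurable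
  qed
  have Bsets: "B n \<in> P.events" for n
    unfolding B_def using finL Asets by auto
  have probA: "measure M (A u) = (\<Prod>i<length u. f (u!i)) * q" for u
  proof -
    define n where "n = length u"
    define T where "T (w::nat list) = (if length w < n then {u!length w<..<r} else {r..})" for w
    define E where "E w = X w -` T w \<inter> space M" for w
    define J where "J = (\<lambda>i. take i u) ` {..n}"
    have injt: "inj_on (\<lambda>i. take i u) {..n}"
      by (rule inj_onI) (metis atMost_iff length_take min.absorb2 n_def)
    have AE: "A u = (\<Inter>w\<in>J. E w)"
    proof
      show "A u \<subseteq> (\<Inter>w\<in>J. E w)"
      proof (intro subsetI INT_I)
        fix \<omega> w assume om: "\<omega> \<in> A u" and "w \<in> J"
        then obtain i where i: "i \<le> n" "w = take i u" unfolding J_def by auto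
        show "\<omega> \<in> E w"
        proof (cases "i < n")
          case True
          then have "length w = i" using i n_def by simp
          then show ?thesis using om True i unfolding A_def E_def T_def n_def by auto
        next
          case False
          then have "w = u" using i n_def by simp
          then show ?thesis using om unfolding A_def E_def T_def n_def by auto
        qed
      qed
      show "(\<Inter>w\<in>J. E w) \<subseteq> A u"
      proof
        fix \<omega> assume w: "\<omega> \<in> (\<Inter>w\<in>J. E w)"
        have e: "\<omega> \<in> E (take i u)" if "i \<le> n" for i using w that unfolding J_def by auto
        have "\<omega> \<in> space M" using e[of n] unfolding E_def by auto
        moreover have "u!i < X (take i u) \<omega> \<and> X (take i u) \<omega> < r" if "i < n" for i
          using e[of i] that unfolding E_def T_def n_def by auto
        moreover have "r \<le> X u \<omega>" using e[of n] unfolding E_def T_def n_def by auto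
        ultimately show "\<omega> \<in> A u" unfolding A_def n_def by auto
      qed
    qed
    have "measure M (A u) = (\<Prod>w\<in>J. measure M (E w))"
      unfolding AE
      by (rule P.indep_setsD[OF ind]) (auto simp: J_def E_def intro: sigma_sets.Basic)
    also have "\<dots> = (\<Prod>i\<in>{..n}. measure M (E (take i u)))"
      unfolding J_def by (rule prod.reindex[OF injt, unfolded comp_def])
    also have "\<dots> = (\<Prod>i\<in>{..n}. (if i < n then f (u!i) else q))"
      by (rule prod.cong) (auto simp: E_def probX T_def f_def q_def n_def min_def)
    also have "\<dots> = (\<Prod>i<n. f (u!i)) * q"
      by (simp add: lessThan_Suc_atMost[symmetric])
    finally show ?thesis by (simp add: n_def)
  qed
  have sum1: "(\<lambda>k. pmf p k) sums 1" by (rule pmf_sums)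
  have q_eq: "q = 1 - (\<Sum>k<r. pmf p k)"
  proof -
    have "{r..} = space (measure_pmf p) - {..<r}" by auto
    then show ?thesis unfolding q_def
      using measure_pmf.prob_compl[of "{..<r}" p] by (simp add: measure_measure_pmf_finite)
  qed
  have q_sum: "q = (\<Sum>n. pmf p (n + r))"
    using suminf_split_initial_segment[OF sums_summable[OF sum1], of r] sums_unique[OF sum1] q_eq
    by simp
  have mu_split: "(\<Sum>k. real k * pmf p k) = (\<Sum>n. real (n + r) * pmf p (n + r)) + (\<Sum>k<r. real k * pmf p k)"
    using suminf_split_initial_segment[OF assms(4), of r] by simp
  have "(\<Sum>n. real r * pmf p (n + r)) \<le> (\<Sum>n. real (n + r) * pmf p (n + r))"
  proof (rule suminf_le)
    show "summable (\<lambda>n. real r * pmf p (n + r))"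
      using summable_ignore_initial_segment[OF sums_summable[OF sum1], of r] by (intro summable_mult) simp
    show "summable (\<lambda>n. real (n + r) * pmf p (n + r))"
      using summable_ignore_initial_segment[OF assms(4), of r] by simp
  qed (auto intro: mult_right_mono)
  moreover have "(\<Sum>n. real r * pmf p (n + r)) = real r * q"
    unfolding q_sum
    using summable_ignore_initial_segment[OF sums_summable[OF sum1], of r] by (intro suminf_mult) simp
  moreover have m_eq: "m = (\<Sum>k<r. real k * pmf p k)"
    unfolding m_def f_def by (simp add: measure_measure_pmf_finite double_sum)
  ultimately have key: "m + real r * q \<le> 1" using mu_split assms(6) by linarith
  have m_nonneg: "m \<ge> 0" unfolding m_def f_def by (simp add: sum_nonneg)
  have q_nonneg: "q \<ge> 0" unfolding q_def by simp
  have Bbound: "measure M (B n) \<le> q * m ^ n" for n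
  proof -
    have "measure M (B n) \<le> (\<Sum>u\<in>L n. measure M (A u))"
      unfolding B_def using finL Asets by (intro P.finite_measure_subadditive_finite) auto
    also have "\<dots> = (\<Sum>u\<in>L n. (\<Prod>i<n. f (u!i)) * q)"
      by (rule sum.cong) (auto simp: probA L_def)
    also have "\<dots> = q * m ^ n"
      unfolding L_def m_def using sum_lists_prod[of "{..<r}" f n]
      by (simp only: mult.commute[of _ q] sum_distrib_left[symmetric]) simp
    finally show ?thesis .
  qed
  have sub: "{\<omega> \<in> space M. enat r \<le> gw_maxdeg X \<omega>} \<subseteq> (\<Union>n. B n)"
  proof
    fix \<omega> assume om: "\<omega> \<in> {\<omega> \<in> space M. enat r \<le> gw_maxdeg X \<omega>}"
    have "\<exists>v. gw_vertex X \<omega> v \<and> r \<le> X v \<omega>"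
    proof (rule ccontr)
      assume "\<not> ?thesis"
      then have "gw_maxdeg X \<omega> \<le> enat (r - 1)"
        unfolding gw_maxdeg_def by (intro SUP_least) auto
      moreover have "enat r \<le> gw_maxdeg X \<omega>" using om by simp
      ultimately have "enat r \<le> enat (r - 1)" by (rule order_trans[rotated])
      then show False using assms(7) by simp
    qed
    then obtain v where v: "gw_vertex X \<omega> v" "r \<le> X v \<omega>" by blast
    define i where "i = (LEAST i. i \<le> length v \<and> r \<le> X (take i v) \<omega>)"
    have ex: "length v \<le> length v \<and> r \<le> X (take (length v) v) \<omega>" using v by simp
    have i1: "i \<le> length v \<and> r \<le> X (take i v) \<omega>"
      unfolding i_def by (rule LeastI[where P="\<lambda>i. i \<le> length v \<and> r \<le> X (take i v) \<omega>", OF ex])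
    have i2: "X (take j v) \<omega> < r" if "j < i" for j
    proof -
      have "j \<le> length v" using that i1 by simp
      then show ?thesis using not_less_Least[where P="\<lambda>i. i \<le> length v \<and> r \<le> X (take i v) \<omega>", OF that[unfolded i_def]] by (auto simp: not_le)
    qed
    define u where "u = take i v"
    have lu: "length u = i" using i1 u_def by simp
    have tk: "take j u = take j v" if "j < i" for j using that u_def by (simp add: min_def)
    have nth: "u ! j = v ! j" if "j < i" for j using that u_def by simp
    have vert: "v ! j < X (take j v) \<omega>" if "j < i" for j
      using v(1) that i1 unfolding gw_vertex_def by auto
    have "\<omega> \<in> A u"
      unfolding A_def using om lu tk nth vert i2 i1 u_def by auto
    moreover have "u \<in> L i"
    proof -
      have "set u \<subseteq> {..<r}"
      proof
        fix x assume "x \<in> set u"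
        then obtain j where "j < i" "x = u ! j" using lu by (auto simp: in_set_conv_nth)
        then show "x \<in> {..<r}" using nth vert i2 by (metis lessThan_iff order.strict_trans)
      qed
      then show ?thesis unfolding L_def using lu by simp
    qed
    ultimately show "\<omega> \<in> (\<Union>n. B n)" unfolding B_def by auto
  qed
  have le1: "measure M {\<omega> \<in> space M. enat r \<le> gw_maxdeg X \<omega>} \<le> measure M (\<Union>n. B n)"
  proof (cases "{\<omega> \<in> space M. enat r \<le> gw_maxdeg X \<omega>} \<in> P.events")
    case True then show ?thesis using sub Bsets by (intro P.finite_measure_mono) auto
  next
    case False then show ?thesis by (simp add: measure_notin_sets)
  qed
  show ?thesis
  proof (cases "q = 0")
    case True
    have "measure M (B n) = 0" for n using Bbound[of n] True measure_nonneg[of M "B n"] by simp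
    then have "measure M (\<Union>n. B n) \<le> (\<Sum>n. measure M (B n))"
      using Bsets by (intro P.finite_measure_subadditive_countably) auto
    then have "measure M (\<Union>n. B n) \<le> 0" using \<open>\<And>n. measure M (B n) = 0\<close> by simp
    moreover have "0 \<le> 1 / real r" by simp
    ultimately show ?thesis using le1 by linarith
  next
    case False
    then have qpos: "q > 0" using q_nonneg by simp
    have r0: "real r > 0" using assms(7) by simp
    have m1: "m < 1" using key qpos r0 by (smt (verit) mult_pos_pos)
    have geo: "(\<lambda>n. q * m ^ n) sums (q * (1 / (1 - m)))"
      using geometric_sums[of m] m1 m_nonneg by (intro sums_mult) simp
    have summ: "summable (\<lambda>n. measure M (B n))"
      by (rule summable_comparison_test[OF _ sums_summable[OF geo]]) (auto intro: Bbound)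
    have "measure M (\<Union>n. B n) \<le> (\<Sum>n. measure M (B n))"
      using Bsets summ by (intro P.finite_measure_subadditive_countably) auto
    also have "\<dots> \<le> (\<Sum>n. q * m ^ n)"
      by (rule suminf_le[OF Bbound summ sums_summable[OF geo]])
    also have "\<dots> = q / (1 - m)" using sums_unique[OF geo] by simp
    also have "\<dots> \<le> 1 / real r"
    proof -
      have "q * real r \<le> 1 - m" using key by (simp add: mult.commute)
      then show ?thesis using m1 r0 by (simp add: divide_simps mult.commute)
    qed
    finally show ?thesis using le1 by simp
  qed
qed

end
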